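(* Let $m,n,p,q,s,t$ be arbitrary integers, let $A(x_1,x_2)=\begin{bmatrix}sx_1 & x_2\\ mx_1+nx_2 & -sx_1\end{bmatrix}$, and let $$P(x_1,x_2,x_3,x_4)=\begin{bmatrix}tA(x_1,x_2) & A(x_3,x_4)\\ pA(x_1,x_2)+qA(x_3,x_4) & -tA(x_1,x_2)\end{bmatrix}.$$ Then there exist trilinear forms $w_1,\dots,w_4$ in independent variables $x_1,\dots,x_4,y_1,\dots,y_4,z_1,\dots,z_4$, with coefficients integer polynomials in $m,n,p,q,s,t$, such that $P(x)P(y)P(z)=P(w)$. Consequently the quaternary quartic form $f=\det P$ satisfies $f(x_1,\dots,x_4)f(y_1,\dots,y_4)f(z_1,\dots,z_4)=f(w_1,\dots,w_4)$ identically. *)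

theory Defs
  imports "Jordan_Normal_Form.Determinant"
begin

inductive_set int_poly_fun :: "nat \<Rightarrow> ((nat \<Rightarrow> int) \<Rightarrow> int) set" for N :: nat where
  const: "(\<lambda>v. c) \<in> int_poly_fun N"
| var: "i < N \<Longrightarrow> (\<lambda>v. v i) \<in> int_poly_fun N"
| add: "f \<in> int_poly_fun N \<Longrightarrow> g \<in> int_poly_fun N \<Longrightarrow> (\<lambda>v. f v + g v) \<in> int_poly_fun N"
| mult: "f \<in> int_poly_fun N \<Longrightarrow> g \<in> int_poly_fun N \<Longrightarrow> (\<lambda>v. f v * g v) \<in> int_poly_fun N"

definition Amat :: "int \<Rightarrow> int \<Rightarrow> int \<Rightarrow> int \<Rightarrow> int \<Rightarrow> int mat" where
  "Amat m n s x1 x2 = mat 2 2 (\<lambda>(i,j).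
      if i = 0 \<and> j = 0 then s * x1
      else if i = 0 then x2
      else if j = 0 then m * x1 + n * x2
      else - (s * x1))"

text \<open>P(x1,..,x4); the variables x_1..x_4 are x 0..x 3.\<close>
definition Pmat :: "int \<Rightarrow> int \<Rightarrow> int \<Rightarrow> int \<Rightarrow> int \<Rightarrow> int \<Rightarrow> (nat \<Rightarrow> int) \<Rightarrow> int mat" where
  "Pmat m n p q s t x =
     (let A1 = Amat m n s (x 0) (x 1); A2 = Amat m n s (x 2) (x 3) in
      four_block_mat (t \<cdot>\<^sub>m A1) A2 (p \<cdot>\<^sub>m A1 + q \<cdot>\<^sub>m A2) ((- t) \<cdot>\<^sub>m A1))"

definition trilin :: "(nat \<Rightarrow> nat \<Rightarrow> nat \<Rightarrow> int) \<Rightarrow> (nat \<Rightarrow> int) \<Rightarrow> (nat \<Rightarrow> int) \<Rightarrow> (nat \<Rightarrow> int) \<Rightarrow> int" where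
  "trilin c x y z = (\<Sum>i<4. \<Sum>j<4. \<Sum>l<4. c i j l * x i * y j * z l)"

end

theory Submission
  imports Defs
begin

definition Wf :: "nat \<Rightarrow> (nat \<Rightarrow> int) \<Rightarrow> (nat \<Rightarrow> int) \<Rightarrow> (nat \<Rightarrow> int) \<Rightarrow> (nat \<Rightarrow> int) \<Rightarrow> int" where
  "Wf k v x y z = (let m = v 0; n = v 1; p = v 2; q = v 3; s = v 4; t = v 5 in
    if k = 0 then ((s * s * t * t * (x 0) * (y 0) * (z 0)) + (q * s * s * (x 2) * (y 2) * (z 0)) + (- q * s * s * (x 2) * (y 0) * (z 2)) + (q * s * s * (x 0) * (y 2) * (z 2)) + (p * s * s * (x 0) * (y 2) * (z 0)) + (n * t * t * (x 1) * (y 1) * (z 0)) + (- n * t * t * (x 1) * (y 0) * (z 1)) + (n * t * t * (x 0) * (y 1) * (z 1)) + (n * q * (x 3) * (y 3) * (z 0)) + (- n * q * (x 3) * (y 2) * (z 1)) + (- n * q * (x 3) * (y 1) * (z 2)) + (n * q * (x 3) * (y 0) * (z 3)) + (n * q * (x 2) * (y 3) * (z 1)) + (- n * q * (x 2) * (y 1) * (z 3)) + (n * q * (x 1) * (y 3) * (z 2)) + (- n * q * (x 1) * (y 2) * (z 3)) + (n * q * (x 0) * (y 3) * (z 3)) + (n * p * (x 1) * (y 3) * (z 0)) + (- n * p * (x 1) * (y 2) * (z 1)) + (n * p * (x 0) * (y 3) * (z 1)) + (m * t * t * (x 0) * (y 1) * (z 0)) + (m * q * (x 2) * (y 3) * (z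 0)) + (- m * q * (x 2) * (y 1) * (z 2)) + (m * q * (x 0) * (y 3) * (z 2)) + (m * p * (x 0) * (y 3) * (z 0)))
    else if k = 1 then ((s * s * t * t * (x 1) * (y 0) * (z 0)) + (- s * s * t * t * (x 0) * (y 1) * (z 0)) + (s * s * t * t * (x 0) * (y 0) * (z 1)) + (q * s * s * (x 3) * (y 2) * (z 0)) + (- q * s * s * (x 3) * (y 0) * (z 2)) + (- q * s * s * (x 2) * (y 3) * (z 0)) + (q * s * s * (x 2) * (y 2) * (z 1)) + (q * s * s * (x 2) * (y 1) * (z 2)) + (- q * s * s * (x 2) * (y 0) * (z 3)) + (q * s * s * (x 1) * (y 2) * (z 2)) + (- q * s * s * (x 0) * (y 3) * (z 2)) + (q * s * s * (x 0) * (y 2) * (z 3)) + (p * s * s * (x 1) * (y 2) * (z 0)) + (- p * s * s * (x 0) * (y 3) * (z 0)) + (p * s * s * (x 0) * (y 2) * (z 1)) + (n * t * t * (x 1) * (y 1) * (z 1)) + (n * q * (x 3) * (y 3) * (z 1)) + (- n * q * (x 3) * (y 1) * (z 3)) + (n * q * (x 1) * (y 3) * (z 3)) + (n * p * (x 1) * (y 3) * (z 1)) + (m * t * t * (x 1) * (y 0) * (z 1)) + (m * q * (x 3) * (y 2) * (z 1)) + (- m * q * (x 3) * (y 0) * (z 3)) + (m * q * (x 1) * (y 2) * (z 3)) + (m * p * (x 1) * (y 2) * (z 1)))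
    else if k = 2 then ((s * s * t * t * (x 2) * (y 0) * (z 0)) + (- s * s * t * t * (x 0) * (y 2) * (z 0)) + (s * s * t * t * (x 0) * (y 0) * (z 2)) + (q * s * s * (x 2) * (y 2) * (z 2)) + (p * s * s * (x 2) * (y 0) * (z 2)) + (n * t * t * (x 3) * (y 1) * (z 0)) + (- n * t * t * (x 3) * (y 0) * (z 1)) + (n * t * t * (x 2) * (y 1) * (z 1)) + (- n * t * t * (x 1) * (y 3) * (z 0)) + (n * t * t * (x 1) * (y 2) * (z 1)) + (n * t * t * (x 1) * (y 1) * (z 2)) + (- n * t * t * (x 1) * (y 0) * (z 3)) + (- n * t * t * (x 0) * (y 3) * (z 1)) + (n * t * t * (x 0) * (y 1) * (z 3)) + (n * q * (x 3) * (y 3) * (z 2)) + (- n * q * (x 3) * (y 2) * (z 3)) + (n * q * (x 2) * (y 3) * (z 3)) + (n * p * (x 3) * (y 1) * (z 2)) + (- n * p * (x 3) * (y 0) * (z 3)) + (n * p * (x 2) * (y 1) * (z 3)) + (m * t * t * (x 2) * (y 1) * (z 0)) + (- m * t * t * (x 0) * (y 3) * (z 0)) + (m * t * t * (x 0) * (y 1) * (z 2)) + (m * q * (x 2) * (y 3) * (z 2)) + (m * p * (x 2) * (y 1) * (z 2)))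
    else ((s * s * t * t * (x 3) * (y 0) * (z 0)) + (- s * s * t * t * (x 2) * (y 1) * (z 0)) + (s * s * t * t * (x 2) * (y 0) * (z 1)) + (- s * s * t * t * (x 1) * (y 2) * (z 0)) + (s * s * t * t * (x 1) * (y 0) * (z 2)) + (s * s * t * t * (x 0) * (y 3) * (z 0)) + (- s * s * t * t * (x 0) * (y 2) * (z 1)) + (- s * s * t * t * (x 0) * (y 1) * (z 2)) + (s * s * t * t * (x 0) * (y 0) * (z 3)) + (q * s * s * (x 3) * (y 2) * (z 2)) + (- q * s * s * (x 2) * (y 3) * (z 2)) + (q * s * s * (x 2) * (y 2) * (z 3)) + (p * s * s * (x 3) * (y 0) * (z 2)) + (- p * s * s * (x 2) * (y 1) * (z 2)) + (p * s * s * (x 2) * (y 0) * (z 3)) + (n * t * t * (x 3) * (y 1) * (z 1)) + (- n * t * t * (x 1) * (y 3) * (z 1)) + (n * t * t * (x 1) * (y 1) * (z 3)) + (n * q * (x 3) * (y 3) * (z 3)) + (n * p * (x 3) * (y 1) * (z 3)) + (m * t * t * (x 3) * (y 0) * (z 1)) + (- m * t * t * (x 1) * (y 2) * (z 1)) + (m * t * t * (x 1) * (y 0) * (z 3)) + (m * q * (x 3) * (y 2) * (z 3)) + (m * p * (x 3) * (y 0) * (z 3))))"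

definition dl :: "nat \<Rightarrow> nat \<Rightarrow> int" where "dl i a = (if a = i then 1 else 0)"

lemma ipf_neg: "f \<in> int_poly_fun N \<Longrightarrow> (\<lambda>v. - f v) \<in> int_poly_fun N"
proof -
  assume "f \<in> int_poly_fun N"
  hence "(\<lambda>v. (-1) * f v) \<in> int_poly_fun N" by (intro int_poly_fun.mult int_poly_fun.const)
  thus ?thesis by simp
qed

lemma Wf_poly: "k < 4 \<Longrightarrow> (\<lambda>v. Wf k v (dl i) (dl j) (dl l)) \<in> int_poly_fun 6"
proof -
  assume "k < 4"
  hence "k = 0 \<or> k = 1 \<or> k = 2 \<or> k = 3" by arith
  thus ?thesis
    by (elim disjE; simp only: Wf_def Let_def if_True if_False zero_neq_one one_neq_zero
        numeral_One[symmetric] numeral_eq_iff semiring_norm simp_thms;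
        intro int_poly_fun.add int_poly_fun.mult ipf_neg int_poly_fun.const int_poly_fun.var; simp)
qed

lemma sum4: "(\<Sum>i<4::nat. f i) = f 0 + f 1 + f 2 + (f 3 :: int)"
  by (simp add: eval_nat_numeral)

lemma Wf_trilin: "k < 4 \<Longrightarrow> trilin (\<lambda>i j l. Wf k v (dl i) (dl j) (dl l)) x y z = Wf k v x y z"
proof -
  assume "k < 4"
  hence "k = 0 \<or> k = 1 \<or> k = 2 \<or> k = 3" by arith
  thus ?thesis
    unfolding trilin_def sum4
    by (elim disjE; simp add: Wf_def Let_def dl_def; algebra)
qed

definition Pe :: "int \<Rightarrow> int \<Rightarrow> int \<Rightarrow> int \<Rightarrow> int \<Rightarrow> int \<Rightarrow> (nat \<Rightarrow> int) \<Rightarrow> nat \<Rightarrow> nat \<Rightarrow> int" where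
  "Pe m n p q s t x i j = [[t*s*x 0, t*x 1, s*x 2, x 3],
     [t*(m*x 0+n*x 1), -(t*s*x 0), m*x 2+n*x 3, -(s*x 2)],
     [p*s*x 0+q*s*x 2, p*x 1+q*x 3, -(t*s*x 0), -(t*x 1)],
     [p*(m*x 0+n*x 1)+q*(m*x 2+n*x 3), p*(-(s*x 0))+q*(-(s*x 2)), -(t*(m*x 0+n*x 1)), t*s*x 0]] ! i ! j"

lemma lt4: "(i::nat) < 4 \<Longrightarrow> i = 0 \<or> i = 1 \<or> i = 2 \<or> i = 3" by arith

lemma Pmat_eq: "Pmat m n p q s t x = mat 4 4 (\<lambda>(i,j). Pe m n p q s t x i j)"
proof (rule eq_matI)
  fix i j assume i: "i < dim_row (mat 4 4 (\<lambda>(i,j). Pe m n p q s t x i j))"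
    and j: "j < dim_col (mat 4 4 (\<lambda>(i,j). Pe m n p q s t x i j))"
  from i j have "i < 4" "j < 4" by auto
  thus "Pmat m n p q s t x $$ (i, j) = mat 4 4 (\<lambda>(i,j). Pe m n p q s t x i j) $$ (i, j)"
    by (auto dest!: lt4 simp: Pmat_def Amat_def Pe_def Let_def four_block_mat_def)
qed (auto simp: Pmat_def Amat_def Let_def)

lemma mat4_mult: "mat 4 4 f * mat 4 4 g = mat 4 4 (\<lambda>(i,j). \<Sum>k<4. f (i,k) * g (k,j) :: int)"
  by (rule eq_matI) (auto simp: scalar_prod_def row_def col_def lessThan_atLeast0 ac_simps)

theorem mainTheorem12:
  shows "\<exists>c :: nat \<Rightarrow> nat \<Rightarrow> nat \<Rightarrow> nat \<Rightarrow> ((nat \<Rightarrow> int) \<Rightarrow> int).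
    (\<forall>k<4. \<forall>i<4. \<forall>j<4. \<forall>l<4. c k i j l \<in> int_poly_fun 6) \<and>
    (\<forall>(m::int) (n::int) (p::int) (q::int) (s::int) (t::int) (x::nat \<Rightarrow> int) (y::nat \<Rightarrow> int) (z::nat \<Rightarrow> int).
       let prm = (\<lambda>i. [m, n, p, q, s, t] ! i);
           w = (\<lambda>k. trilin (\<lambda>i j l. c k i j l prm) x y z) in
       Pmat m n p q s t x * Pmat m n p q s t y * Pmat m n p q s t z = Pmat m n p q s t w \<and>
       det (Pmat m n p q s t x) * det (Pmat m n p q s t y) * det (Pmat m n p q s t z)
         = det (Pmat m n p q s t w))"
proof (rule exI[of _ "\<lambda>k i j l v. Wf k v (dl i) (dl j) (dl l)"], intro conjI allI impI)
  fix k i j l :: nat assume "k < 4"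
  thus "(\<lambda>v. Wf k v (dl i) (dl j) (dl l)) \<in> int_poly_fun 6" by (rule Wf_poly)
next
  fix m n p q s t :: int and x y z :: "nat \<Rightarrow> int"
  define prm where "prm = (\<lambda>i. [m, n, p, q, s, t] ! i)"
  define w where "w = (\<lambda>k. trilin (\<lambda>i j l. Wf k prm (dl i) (dl j) (dl l)) x y z)"
  have w: "w = (\<lambda>k. if k < 4 then Wf k prm x y z else w k)"
    unfolding w_def using Wf_trilin by auto
  have prm: "prm 0 = m" "prm 1 = n" "prm 2 = p" "prm 3 = q" "prm 4 = s" "prm 5 = t"
    by (simp_all add: prm_def)
  have w0: "w 0 = Wf 0 prm x y z" and w1: "w 1 = Wf 1 prm x y z"
    and w2: "w 2 = Wf 2 prm x y z" and w3: "w 3 = Wf 3 prm x y z"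
    by (subst w; simp)+
  have w1': "w (Suc 0) = Wf 1 prm x y z" using w1 by simp
  have eq: "Pmat m n p q s t x * Pmat m n p q s t y * Pmat m n p q s t z = Pmat m n p q s t w"
    unfolding Pmat_eq mat4_mult
  proof (rule eq_matI, goal_cases)
    case (1 i j)
    hence ij: "i < 4" "j < 4" by auto
    thus ?case
      by (auto dest!: lt4 simp: sum4 Pe_def w0 w1' w2 w3 Wf_def Let_def prm_def) (simp_all add: algebra_simps)
  qed auto
  show "let prm = \<lambda>i. [m, n, p, q, s, t] ! i; w = \<lambda>k. trilin (\<lambda>i j l. Wf k prm (dl i) (dl j) (dl l)) x y z
        in Pmat m n p q s t x * Pmat m n p q s t y * Pmat m n p q s t z = Pmat m n p q s t w \<and>
           det (Pmat m n p q s t x) * det (Pmat m n p q s t y) * det (Pmat m n p q s t z) = det (Pmat m n p q s t w)"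
    unfolding Let_def prm_def[symmetric] w_def[symmetric]
  proof
    show eq' : "Pmat m n p q s t x * Pmat m n p q s t y * Pmat m n p q s t z = Pmat m n p q s t w" by (rule eq)
    have c: "\<And>x. Pmat m n p q s t x \<in> carrier_mat 4 4" by (simp add: Pmat_eq)
    show "det (Pmat m n p q s t x) * det (Pmat m n p q s t y) * det (Pmat m n p q s t z) = det (Pmat m n p q s t w)"
      unfolding eq'[symmetric] det_mult[OF mult_carrier_mat[OF c c] c] det_mult[OF c c] ..
  qed
qed

end
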